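(* Let $G_{\max}=(V,E_{\max})$ be a finite, simple, connected, undirected graph on $N$ nodes and let $\lambda',\mu',\gamma'>0$. Consider the Sum-Dependent Dynamic Bond Percolation (SUD-DBP) process $\{A(t),t\ge 0\}$: the continuous-time Markov process whose state space $\mathcal{A}$ is the set of all $2^{|E_{\max}|}$ subsets $E(\mathbf{A})\subseteq E_{\max}$ of closed edges (equivalently, the symmetric $0/1$ adjacency matrices $\mathbf{A}$ supported on $E_{\max}$), in which only one edge changes state per transition, each closed edge $(a,b)$ opens at rate $\mu'$, and each open edge $(a,b)\in E_{\max}$ closes at rate $\lambda'\gamma'^{\,k_a+k_b}$, where $k_i=\sum_{j=1}^N\mathbf{A}_{ij}$ is the number of closed edges incident to node $i$ in the current state $\mathbf{A}$. Then $\{A(t)\}$ is a reversible Markov process and its equilibrium distribution is \[ \pi(\mathbf{A})=\frac{1}{Z}\left(\frac{\lambda'}{\mu'}\right)^{|E(\mathbf{A})|}\gamma'^{\,g(E(\mathbf{A}))},\qquad \mathbf{A}\in\mathcal{A}, \] where $Z=\sum_{\mathbf{A}\in\mathcal{A}}(\lambda'/\mu')^{|E(\mathbf{A})|}\gamma'^{\,g(E(\mathbf{A}))}$, $|E(\mathbf{A})|=\frac{\mathbf{1}^T\mathbf{A}\mathbf{1}}{2}$ is the number of closed edges, and $g(E(\mathbf{A}))$ is the number of $P_3$ subgraphs (paths on 3 vertices) formed by the closed edges, given by \[ g(E(\mathbf{A}))=\sum_{i=1}^N\sum_{j>i}(\mathbf{A}^2)_{i,j}=\sum_{i=1}^N\binom{k_i}{2}.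 \]
   Context: An edge is "closed" if it is present in the current network state and "open" otherwise; the network state is the adjacency matrix $\mathbf{A}$ of the graph $(V,E(\mathbf{A}))$ of closed edges. $\mathbf{1}=[1,\dots,1]^T$. A $P_3$ subgraph is a path with 3 distinct vertices and 2 edges. A stationary Markov process is reversible if it is statistically the same run forward and backward in time (equivalently, its equilibrium distribution satisfies detailed balance $\pi(j)q(j,k)=\pi(k)q(k,j)$ for all states $j,k$, with $q$ the transition rates). *)

theory Defs
  imports Complex_Main
begin

definition simple_graph :: "'a set \<Rightarrow> 'a set set \<Rightarrow> bool" where
  "simple_graph V E \<longleftrightarrow> finite V \<and>
     (\<forall>e\<in>E. \<exists>a b. a \<in> V \<and> b \<in> V \<and> a \<noteq> b \<and> e = {a, b})"

definition connected_graph :: "'a set \<Rightarrow> 'a set set \<Rightarrow> bool" where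
  "connected_graph V E \<longleftrightarrow>
     (\<forall>u\<in>V. \<forall>v\<in>V. (u, v) \<in> {(a, b). {a, b} \<in> E}\<^sup>*)"

definition deg :: "'a set set \<Rightarrow> 'a \<Rightarrow> nat" where
  "deg S i = card {e \<in> S. i \<in> e}"

text \<open>Number of P3 subgraphs formed by the edge set S: pairs of edges of S
  spanning exactly 3 vertices (a path with 3 distinct vertices and 2 edges).\<close>
definition numP3 :: "'a set set \<Rightarrow> nat" where
  "numP3 S = card {F. F \<subseteq> S \<and> card F = 2 \<and> card (\<Union>F) = 3}"

definition sud_rate :: "'a set set \<Rightarrow> real \<Rightarrow> real \<Rightarrow> real \<Rightarrow> 'a set set \<Rightarrow> 'a set set \<Rightarrow> real" where
  "sud_rate Emax lam mu gam S T =
     (if S \<subseteq> Emax \<and> T \<subseteq> Emax then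
        (if \<exists>e\<in>Emax - S. T = insert e S
         then (let e = (THE e. e \<in> Emax - S \<and> T = insert e S) in lam * gam ^ (\<Sum>v\<in>e. deg S v))
         else if \<exists>e\<in>S. T = S - {e} then mu else 0)
      else 0)"

definition sud_pi :: "'a set set \<Rightarrow> real \<Rightarrow> real \<Rightarrow> real \<Rightarrow> 'a set set \<Rightarrow> real" where
  "sud_pi Emax lam mu gam S =
     (lam / mu) ^ card S * gam ^ numP3 S /
     (\<Sum>T\<in>Pow Emax. (lam / mu) ^ card T * gam ^ numP3 T)"

definition stationary_dist :: "'s set \<Rightarrow> ('s \<Rightarrow> 's \<Rightarrow> real) \<Rightarrow> ('s \<Rightarrow> real) \<Rightarrow> bool" where
  "stationary_dist X q p \<longleftrightarrow> (\<forall>s\<in>X. p s \<ge> 0) \<and> (\<Sum>s\<in>X. p s) = 1 \<and>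
     (\<forall>t\<in>X. (\<Sum>s\<in>X - {t}. p s * q s t) = p t * (\<Sum>u\<in>X - {t}. q t u))"

end

theory Submission
  imports Defs
begin

lemma two_set_inter:
  assumes "card f = 2" "card g = 2" "f \<noteq> g" "i \<in> f" "i \<in> g"
  shows "card (f \<union> g) = 3"
proof -
  have ff: "finite f" "finite g" using assms(1,2) by (auto intro: card_ge_0_finite)
  have "card (f \<inter> g) \<noteq> 2"
  proof
    assume "card (f \<inter> g) = 2"
    then have "f \<inter> g = f" "f \<inter> g = g" using ff assms(1,2)
      by (metis Int_lower1 Int_lower2 card_subset_eq)+
    then show False using assms(3) by simp
  qed
  moreover have "card (f \<inter> g) \<le> 2" using ff assms(1) by (metis Int_lower1 card_mono)
  moreover have "card (f \<inter> g) \<ge> 1" using ff assms(4,5)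
    by (metis IntI card_0_eq empty_iff finite_Int less_one not_le)
  ultimately have "card (f \<inter> g) = 1" by linarith
  moreover have "card f + card g = card (f \<union> g) + card (f \<inter> g)" using ff card_Un_Int by blast
  ultimately show ?thesis using assms(1,2) by linarith
qed

lemma numP3_formula:
  assumes fV: "finite V" and E: "\<forall>e\<in>S. e \<subseteq> V \<and> card e = 2" and fS: "finite S"
  shows "numP3 S = (\<Sum>i\<in>V. deg S i choose 2)"
proof -
  define P where "P i = {F. F \<subseteq> {e\<in>S. i\<in>e} \<and> card F = 2}" for i
  have cardP: "card (P i) = deg S i choose 2" for i
    unfolding P_def deg_def by (rule n_subsets) (use fS in simp)
  have finP: "finite (P i)" for i
    unfolding P_def using fS by (auto intro: finite_subset[of _ "Pow S"])
  have eq: "{F. F \<subseteq> S \<and> card F = 2 \<and> card (\<Union>F) = 3} = (\<Union>i\<in>V. P i)"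
  proof (intro equalityI subsetI)
    fix F assume "F \<in> {F. F \<subseteq> S \<and> card F = 2 \<and> card (\<Union>F) = 3}"
    then have F: "F \<subseteq> S" "card F = 2" "card (\<Union>F) = 3" by auto
    then obtain f g where fg: "F = {f,g}" "f \<noteq> g" by (meson card_2_iff)
    have c: "card f = 2" "card g = 2" "f \<subseteq> V" using E F fg by auto
    have ff: "finite f" "finite g" using c by (auto intro: card_ge_0_finite)
    have "card (f \<union> g) = 3" using F fg by simp
    moreover have "card f + card g = card (f \<union> g) + card (f \<inter> g)" using ff card_Un_Int by blast
    ultimately have "card (f \<inter> g) = 1" using c by linarith
    then obtain i where i: "f \<inter> g = {i}" by (auto simp: card_1_singleton_iff)
    then have "i \<in> V" using c by auto
    moreover have "F \<in> P i" unfolding P_def using F fg i by auto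
    ultimately show "F \<in> (\<Union>i\<in>V. P i)" by blast
  next
    fix F assume "F \<in> (\<Union>i\<in>V. P i)"
    then obtain i where "F \<in> P i" by blast
    then have F: "F \<subseteq> S" "card F = 2" "\<forall>f\<in>F. i \<in> f" unfolding P_def by auto
    then obtain f g where fg: "F = {f,g}" "f \<noteq> g" by (meson card_2_iff)
    have "card (f \<union> g) = 3"
      using two_set_inter[of f g i] E F fg by auto
    then show "F \<in> {F. F \<subseteq> S \<and> card F = 2 \<and> card (\<Union>F) = 3}" using F fg by auto
  qed
  have disj: "\<forall>i\<in>V. \<forall>j\<in>V. i \<noteq> j \<longrightarrow> P i \<inter> P j = {}"
  proof (intro ballI impI equalityI subsetI)
    fix i j F assume ij: "i \<noteq> j" and "F \<in> P i \<inter> P j"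
    then have F: "F \<subseteq> S" "card F = 2" "\<forall>f\<in>F. i \<in> f \<and> j \<in> f" unfolding P_def by auto
    then obtain f g where fg: "F = {f,g}" "f \<noteq> g" by (meson card_2_iff)
    have c: "card f = 2" "card g = 2" using E F fg by auto
    have ff: "finite f" "finite g" using c by (auto intro: card_ge_0_finite)
    have "{i,j} \<subseteq> f" "{i,j} \<subseteq> g" using F fg by auto
    moreover have "card {i,j} = 2" using ij by simp
    ultimately have "f = {i,j}" "g = {i,j}" using c ff by (metis card_subset_eq)+
    then show "F \<in> {}" using fg by simp
  qed simp
  have "numP3 S = card (\<Union>i\<in>V. P i)" unfolding numP3_def eq ..
  also have "\<dots> = (\<Sum>i\<in>V. card (P i))" using card_UN_disjoint[OF fV _ disj] finP by blast
  finally show ?thesis using cardP by simp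
qed

lemma deg_insert:
  assumes "finite S" "e \<notin> S"
  shows "deg (insert e S) i = deg S i + (if i \<in> e then 1 else 0)"
proof (cases "i \<in> e")
  case True
  then have "{f \<in> insert e S. i \<in> f} = insert e {f \<in> S. i \<in> f}" by auto
  then show ?thesis using assms True unfolding deg_def by simp
next
  case False
  then have "{f \<in> insert e S. i \<in> f} = {f \<in> S. i \<in> f}" by auto
  then show ?thesis using False unfolding deg_def by simp
qed

lemma choose2_Suc: "(Suc k choose 2) = (k choose 2) + k"
  by (simp add: numeral_2_eq_2)

lemma numP3_insert:
  assumes fV: "finite V" and E: "\<forall>e\<in>insert e S. e \<subseteq> V \<and> card e = 2" and fS: "finite S"
    and eS: "e \<notin> S"
  shows "numP3 (insert e S) = numP3 S + (\<Sum>v\<in>e. deg S v)"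
proof -
  have "numP3 (insert e S) = (\<Sum>i\<in>V. deg (insert e S) i choose 2)"
    using numP3_formula[OF fV E] fS by simp
  also have "\<dots> = (\<Sum>i\<in>V. (deg S i choose 2) + (if i \<in> e then deg S i else 0))"
    using deg_insert[OF fS eS] choose2_Suc by (intro sum.cong) auto
  also have "\<dots> = numP3 S + (\<Sum>i\<in>V. if i \<in> e then deg S i else 0)"
    using numP3_formula[OF fV _ fS] E by (simp add: sum.distrib)
  also have "(\<Sum>i\<in>V. if i \<in> e then deg S i else 0) = (\<Sum>i\<in>V \<inter> e. deg S i)"
    using fV by (simp add: sum.inter_restrict)
  also have "V \<inter> e = e" using E by auto
  finally show ?thesis .
qed


lemma rate_add:
  assumes "e \<in> Emax" "e \<notin> S" "S \<subseteq> Emax"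
  shows "sud_rate Emax lam mu gam S (insert e S) = lam * gam ^ (\<Sum>v\<in>e. deg S v)"
proof -
  have ex: "\<exists>e'\<in>Emax - S. insert e S = insert e' S" using assms by blast
  have th: "(THE e'. e' \<in> Emax - S \<and> insert e S = insert e' S) = e"
    by (rule the_equality) (use assms in auto)
  have "insert e S \<subseteq> Emax" using assms by blast
  then show ?thesis unfolding sud_rate_def Let_def using assms(3) ex th by simp
qed
lemma rate_zero:
  assumes "\<not>(\<exists>e\<in>Emax - S. T = insert e S)" "\<not>(\<exists>e\<in>S. T = S - {e})"
  shows "sud_rate Emax lam mu gam S T = 0"
  using assms unfolding sud_rate_def by simp

lemma rate_nonneg:
  assumes "lam > 0" "mu > 0" "gam > 0"
  shows "sud_rate Emax lam mu gam S T \<ge> 0"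
  using assms unfolding sud_rate_def Let_def by simp

lemma rate_del:
  assumes "e \<in> S" "S \<subseteq> Emax"
  shows "sud_rate Emax lam mu gam S (S - {e}) = mu"
proof -
  have "\<not>(\<exists>e'\<in>Emax - S. S - {e} = insert e' S)" using assms by blast
  moreover have "\<exists>e'\<in>S. S - {e} = S - {e'}" using assms by blast
  moreover have "S - {e} \<subseteq> Emax" using assms by blast
  ultimately show ?thesis unfolding sud_rate_def using assms by simp
qed

lemma db_add:
  fixes lam mu gam :: real
  assumes fV: "finite V" and E: "\<forall>e\<in>Emax. e \<subseteq> V \<and> card e = 2" and fE: "finite Emax"
    and pos: "lam > 0" "mu > 0" "gam > 0"
    and e: "e \<in> Emax" "e \<notin> S" and S: "S \<subseteq> Emax"
    and w: "\<And>S. w S = (lam / mu) ^ card S * gam ^ numP3 S"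
  shows "w S * sud_rate Emax lam mu gam S (insert e S)
       = w (insert e S) * sud_rate Emax lam mu gam (insert e S) S"
proof -
  have fS: "finite S" using S fE finite_subset by blast
  have r1: "sud_rate Emax lam mu gam S (insert e S) = lam * gam ^ (\<Sum>v\<in>e. deg S v)"
    using rate_add[OF e S] .
  have "sud_rate Emax lam mu gam (insert e S) (insert e S - {e}) = mu"
    using rate_del[of e "insert e S" Emax] e S by blast
  moreover have "insert e S - {e} = S" using e by auto
  ultimately have r2: "sud_rate Emax lam mu gam (insert e S) S = mu" by simp
  have n: "numP3 (insert e S) = numP3 S + (\<Sum>v\<in>e. deg S v)"
    using numP3_insert[OF fV _ fS e(2)] E e S by auto
  have c: "card (insert e S) = Suc (card S)" using fS e by simp
  show ?thesis unfolding r1 r2 w n c using pos by (simp add: power_add field_simps)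
qed

theorem theorem2:
  fixes V :: "'a set" and Emax :: "'a set set" and lam mu gam :: real
  assumes "simple_graph V Emax" and "connected_graph V Emax"
    and "lam > 0" and "mu > 0" and "gam > 0"
  shows "(\<forall>S\<in>Pow Emax. numP3 S = (\<Sum>i\<in>V. deg S i choose 2))
    \<and> stationary_dist (Pow Emax) (sud_rate Emax lam mu gam) (sud_pi Emax lam mu gam)
    \<and> (\<forall>p. stationary_dist (Pow Emax) (sud_rate Emax lam mu gam) p \<longrightarrow>
            (\<forall>S\<in>Pow Emax. p S = sud_pi Emax lam mu gam S))
    \<and> (\<forall>S\<in>Pow Emax. \<forall>T\<in>Pow Emax.
         sud_pi Emax lam mu gam S * sud_rate Emax lam mu gam S T =
         sud_pi Emax lam mu gam T * sud_rate Emax lam mu gam T S)"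
proof -
  note pos = assms(3,4,5)
  have fV: "finite V" using assms(1) unfolding simple_graph_def by auto
  have E: "\<forall>e\<in>Emax. e \<subseteq> V \<and> card e = 2" using assms(1) unfolding simple_graph_def by auto
  have fE: "finite Emax" using E fV by (meson Pow_iff finite_Pow_iff finite_subset subsetI)
  define X where "X = Pow Emax"
  define q where "q = sud_rate Emax lam mu gam"
  define w where "w S = (lam / mu) ^ card S * gam ^ numP3 S" for S :: "'a set set"
  define Z where "Z = (\<Sum>T\<in>X. w T)"
  define pi where "pi = sud_pi Emax lam mu gam"
  have fX: "finite X" unfolding X_def using fE by simp
  have wpos: "w S > 0" for S unfolding w_def using pos by simp
  have Zpos: "Z > 0" unfolding Z_def using fX wpos by (intro sum_pos) (auto simp: X_def)
  have pi: "pi S = w S / Z" for S unfolding pi_def sud_pi_def Z_def w_def X_def ..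
  have pipos: "pi S > 0" for S using pi wpos Zpos by simp
  have qnn: "q S T \<ge> 0" for S T unfolding q_def using rate_nonneg pos by blast
  have part1: "\<forall>S\<in>Pow Emax. numP3 S = (\<Sum>i\<in>V. deg S i choose 2)"
    using numP3_formula[OF fV] E fE by (auto intro: finite_subset)
  have dbw: "w S * q S T = w T * q T S" if S: "S \<in> X" and T: "T \<in> X" for S T
  proof (cases "\<exists>e\<in>Emax - S. T = insert e S")
    case True
    then obtain e where "e \<in> Emax" "e \<notin> S" "T = insert e S" by blast
    then show ?thesis unfolding q_def using db_add[OF fV E fE pos, of e S w] S w_def X_def by auto
  next
    case F1: False
    show ?thesis
    proof (cases "\<exists>e\<in>S. T = S - {e}")
      case True
      then obtain e where e: "e \<in> S" "T = S - {e}" by blast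
      then have "S = insert e T" "e \<notin> T" "e \<in> Emax" using S X_def by auto
      then show ?thesis unfolding q_def using db_add[OF fV E fE pos, of e T w] T w_def X_def
        by (metis Pow_iff)
    next
      case F2: False
      have "q S T = 0" unfolding q_def using rate_zero F1 F2 by blast
      moreover have "q T S = 0" unfolding q_def
      proof (rule rate_zero)
        show "\<not>(\<exists>e\<in>Emax - T. S = insert e T)" using F2 by auto
        show "\<not>(\<exists>e\<in>T. S = T - {e})" using F1 S T X_def by auto
      qed
      ultimately show ?thesis by simp
    qed
  qed
  have db: "pi S * q S T = pi T * q T S" if "S \<in> X" "T \<in> X" for S T
    using dbw[OF that] unfolding pi by (simp add: field_simps)
  have sumpi: "(\<Sum>s\<in>X. pi s) = 1"
    unfolding pi using Zpos by (simp add: Z_def sum_divide_distrib[symmetric])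
  have part2: "stationary_dist X q pi"
    unfolding stationary_dist_def
  proof (intro conjI ballI)
    fix t assume t: "t \<in> X"
    have "(\<Sum>s\<in>X - {t}. pi s * q s t) = (\<Sum>s\<in>X - {t}. pi t * q t s)"
      using db t by (intro sum.cong) auto
    then show "(\<Sum>s\<in>X - {t}. pi s * q s t) = pi t * (\<Sum>u\<in>X - {t}. q t u)"
      by (simp add: sum_distrib_left)
  qed (use pipos sumpi less_imp_le in auto)
  have part3: "\<forall>S\<in>X. p S = pi S" if st: "stationary_dist X q p" for p
  proof -
    define h where "h s = p s / pi s" for s
    have ph: "p s = h s * pi s" for s unfolding h_def using pipos[of s] by simp
    have harm: "(\<Sum>s\<in>X - {t}. q t s * (h t - h s)) = 0" if t: "t \<in> X" for t
    proof -
      have gb: "(\<Sum>s\<in>X - {t}. p s * q s t) = p t * (\<Sum>u\<in>X - {t}. q t u)"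
        using st t unfolding stationary_dist_def by blast
      have a: "(\<Sum>s\<in>X - {t}. p s * q s t) = pi t * (\<Sum>s\<in>X - {t}. q t s * h s)"
        unfolding sum_distrib_left using db t by (intro sum.cong) (auto simp: ph)
      have b: "p t * (\<Sum>u\<in>X - {t}. q t u) = pi t * (\<Sum>s\<in>X - {t}. q t s * h t)"
        unfolding ph by (simp add: sum_distrib_left sum_distrib_right mult_ac)
      have "pi t * (\<Sum>s\<in>X - {t}. q t s * h s) = pi t * (\<Sum>s\<in>X - {t}. q t s * h t)"
        using a b gb by (simp only:)
      then have "(\<Sum>s\<in>X - {t}. q t s * h s) = (\<Sum>s\<in>X - {t}. q t s * h t)"
        using pipos[of t] by simp
      then show ?thesis by (simp add: right_diff_distrib sum_subtractf)
    qed
    define m where "m = Max (h ` X)"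
    have Xne: "X \<noteq> {}" unfolding X_def by auto
    have hle: "h s \<le> m" if "s \<in> X" for s unfolding m_def
      by (rule Max_ge) (use fX that in auto)
    have "m \<in> h ` X" unfolding m_def by (rule Max_in) (use fX Xne in auto)
    then have hex: "\<exists>t\<in>X. h t = m" by auto
    have clos: "h s = m" if t: "t \<in> X" "h t = m" and s: "s \<in> X" "s \<noteq> t" "q t s > 0" for s t
    proof -
      have nn: "\<forall>x\<in>X - {t}. 0 \<le> q t x * (h t - h x)" using qnn hle t by auto
      have "\<forall>x\<in>X - {t}. q t x * (h t - h x) = 0"
        using sum_nonneg_eq_0_iff[of "X - {t}" "\<lambda>x. q t x * (h t - h x)"] fX nn harm[OF t(1)] by blast
      then have "q t s * (h t - h s) = 0" using s by blast
      then show ?thesis using s t by simp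
    qed
    have del: "h (T - {e}) = m" if "T \<in> X" "h T = m" "e \<in> T" for T e
    proof -
      have "q T (T - {e}) = mu" unfolding q_def
        using rate_del[of e T Emax lam mu gam] that by (simp add: X_def)
      moreover have "T - {e} \<in> X" "T - {e} \<noteq> T" using that by (auto simp: X_def)
      ultimately show ?thesis using clos[OF that(1,2), of "T - {e}"] pos by simp
    qed
    have add: "h (insert e T) = m" if "T \<in> X" "h T = m" "e \<in> Emax" "e \<notin> T" for T e
    proof -
      have "q T (insert e T) > 0" unfolding q_def
        using rate_add[of e Emax T lam mu gam] that pos by (simp add: X_def)
      then show ?thesis using clos[OF that(1,2), of "insert e T"] that by (auto simp: X_def)
    qed
    have toempty: "finite T \<Longrightarrow> T \<in> X \<Longrightarrow> h T = m \<Longrightarrow> h {} = m" for T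
    proof (induction T rule: finite_induct)
      case (insert e F)
      have "h (insert e F - {e}) = m" using del[OF insert.prems, of e] by simp
      moreover have "insert e F - {e} = F" using insert.hyps by auto
      ultimately have "h F = m" by simp
      moreover have "F \<in> X" using insert.prems by (auto simp: X_def)
      ultimately show ?case using insert.IH by blast
    qed simp
    have finX: "finite T" if "T \<in> X" for T using that fE by (auto simp: X_def intro: finite_subset)
    obtain t0 where "t0 \<in> X" "h t0 = m" using hex by blast
    then have h0: "h {} = m" using toempty finX by blast
    have fromempty: "finite T \<Longrightarrow> T \<in> X \<Longrightarrow> h T = m" for T
    proof (induction T rule: finite_induct)
      case (insert e F)
      then show ?case using add[of F e] by (auto simp: X_def)
    qed (use h0 in simp)
    have hm: "\<forall>s\<in>X. h s = m" using fromempty finX by blast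
    have "1 = (\<Sum>s\<in>X. p s)" using st unfolding stationary_dist_def by simp
    also have "\<dots> = (\<Sum>s\<in>X. m * pi s)" using hm ph by (intro sum.cong) auto
    also have "\<dots> = m" using sumpi by (simp add: sum_distrib_left[symmetric])
    finally have "m = 1" by simp
    then show ?thesis using hm ph by simp
  qed
  show ?thesis using part1 part2 part3 db unfolding X_def q_def pi_def by blast
qed

end
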